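(* Let $(G,\cdot)$ be a loop with identity $e$ and $(H,\cdot)$ a non-trivial subloop such that $(xs\cdot z)s=x(sz\cdot s)$ for all $x,z\in G$, $s\in H$. If $(U,T,U)\in\mathrm{S_{1st}AUT}(G_H)$, then $T$ is a second Smarandache semi-automorphism of $G_H$, i.e. $eT=e$ and $(sy\cdot s)T=(sT\cdot yT)sT$ for all $y\in G$, $s\in H$.
   Context: Juxtaposition binds more tightly than $\cdot$; maps are written on the right. $SSYM(G_H)$ is the set of bijections $A$ of $G$ with $HA=H$. $\mathrm{S_{1st}AUT}(G_H)$ is the set of triples $(U,V,W)$ with $U,V,W\in SSYM(G_H)$ and $xU\cdot yV=(x\cdot y)W$ for all $x,y\in G$. *)

theory Defs
  imports Main
begin

definition loop :: "'a set \<Rightarrow> ('a \<Rightarrow> 'a \<Rightarrow> 'a) \<Rightarrow> 'a \<Rightarrow> bool" where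
  "loop G m e \<longleftrightarrow>
     (\<forall>x\<in>G. \<forall>y\<in>G. m x y \<in> G) \<and> e \<in> G \<and>
     (\<forall>x\<in>G. m e x = x \<and> m x e = x) \<and>
     (\<forall>a\<in>G. \<forall>b\<in>G. \<exists>!x. x \<in> G \<and> m a x = b) \<and>
     (\<forall>a\<in>G. \<forall>b\<in>G. \<exists>!y. y \<in> G \<and> m y a = b)"

definition subloop :: "'a set \<Rightarrow> 'a set \<Rightarrow> ('a \<Rightarrow> 'a \<Rightarrow> 'a) \<Rightarrow> 'a \<Rightarrow> bool" where
  "subloop H G m e \<longleftrightarrow> H \<subseteq> G \<and> loop H m e"

text \<open>SSYM(G_H): bijections A of G with HA = H (maps written on the right: xA = A x).\<close>
definition SSYM :: "'a set \<Rightarrow> 'a set \<Rightarrow> ('a \<Rightarrow> 'a) set" where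
  "SSYM G H = {A. bij_betw A G G \<and> A ` H = H}"

definition S1stAUT :: "'a set \<Rightarrow> 'a set \<Rightarrow> ('a \<Rightarrow> 'a \<Rightarrow> 'a) \<Rightarrow>
    (('a \<Rightarrow> 'a) \<times> ('a \<Rightarrow> 'a) \<times> ('a \<Rightarrow> 'a)) set" where
  "S1stAUT G H m = {(U, V, W). U \<in> SSYM G H \<and> V \<in> SSYM G H \<and> W \<in> SSYM G H \<and>
      (\<forall>x\<in>G. \<forall>y\<in>G. m (U x) (V y) = W (m x y))}"

end

theory Submission
  imports Defs
begin

theorem theorem3p6:
  fixes G H :: "'a set" and m :: "'a \<Rightarrow> 'a \<Rightarrow> 'a" and e :: 'a
    and U T :: "'a \<Rightarrow> 'a"
  assumes "loop G m e"
    and "subloop H G m e"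
    and "H \<noteq> {e}"
    and "\<forall>x\<in>G. \<forall>z\<in>G. \<forall>s\<in>H. m (m (m x s) z) s = m x (m (m s z) s)"
    and "(U, T, U) \<in> S1stAUT G H m"
  shows "T e = e \<and> (\<forall>y\<in>G. \<forall>s\<in>H. T (m (m s y) s) = m (m (T s) (T y)) (T s))"
proof -
  have cl: "\<And>x y. x \<in> G \<Longrightarrow> y \<in> G \<Longrightarrow> m x y \<in> G" and eG: "e \<in> G"
    and id: "\<And>x. x \<in> G \<Longrightarrow> m e x = x \<and> m x e = x"
    and lc: "\<And>a b. a \<in> G \<Longrightarrow> b \<in> G \<Longrightarrow> \<exists>!x. x \<in> G \<and> m a x = b"
    using assms(1) unfolding loop_def by auto
  have HG: "H \<subseteq> G" using assms(2) unfolding subloop_def by auto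
  have U: "bij_betw U G G" "U ` H = H" and T: "bij_betw T G G" "T ` H = H"
    and hom: "\<And>x y. x \<in> G \<Longrightarrow> y \<in> G \<Longrightarrow> m (U x) (T y) = U (m x y)"
    using assms(5) unfolding S1stAUT_def SSYM_def by auto
  have UG: "\<And>x. x \<in> G \<Longrightarrow> U x \<in> G" and TG: "\<And>x. x \<in> G \<Longrightarrow> T x \<in> G"
    using bij_betwE[OF U(1)] bij_betwE[OF T(1)] by simp_all
  have TH: "\<And>x. x \<in> H \<Longrightarrow> T x \<in> H" proof -
    fix x assume "x \<in> H" then have "T x \<in> T ` H" by (rule imageI)
    then show "T x \<in> H" using T(2) by simp
  qed
  have canc: "\<And>a b c. a \<in> G \<Longrightarrow> b \<in> G \<Longrightarrow> c \<in> G \<Longrightarrow> m a b = m a c \<Longrightarrow> b = c"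
  proof -
    fix a b c assume "a \<in> G" "b \<in> G" "c \<in> G" "m a b = m a c"
    then show "b = c" using lc[of a "m a b"] cl[of a b] by (metis (no_types))
  qed
  obtain x0 where x0: "x0 \<in> G" "U x0 = e" using U(1) eG unfolding bij_betw_def by (metis imageE)
  have "m e (T e) = e" using hom[OF x0(1) eG] x0 id by simp
  hence Te: "T e = e" using id[OF TG[OF eG]] by simp
  have main: "\<forall>y\<in>G. \<forall>s\<in>H. T (m (m s y) s) = m (m (T s) (T y)) (T s)"
  proof (intro ballI)
    fix y s assume y: "y \<in> G" and s: "s \<in> H"
    have sG: "s \<in> G" using s HG by auto
    have TsH: "T s \<in> H" using TH s .
    have TsG: "T s \<in> G" using TsH HG by auto
    have es: "m e s \<in> G" using cl eG sG by blast
    have esy: "m (m e s) y \<in> G" using cl es y by blast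
    have h1: "U (m (m (m e s) y) s) = m (U (m (m e s) y)) (T s)" using hom[OF esy sG] by simp
    have h2: "U (m (m e s) y) = m (U (m e s)) (T y)" using hom[OF es y] by simp
    have h3: "U (m e s) = m (U e) (T s)" using hom[OF eG sG] by simp
    have "U (m (m (m e s) y) s) = m (m (m (U e) (T s)) (T y)) (T s)" using h1 h2 h3 by simp
    also have "\<dots> = m (U e) (m (m (T s) (T y)) (T s))"
      by (rule bspec[OF bspec[OF bspec[OF assms(4) UG[OF eG]] TG[OF y]] TsH])
    finally have 1: "U (m (m (m e s) y) s) = m (U e) (m (m (T s) (T y)) (T s))" .
    have "U (m (m (m e s) y) s) = U (m e (m (m s y) s))"
      using bspec[OF bspec[OF bspec[OF assms(4) eG] y] s] by (rule arg_cong)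
    also have "\<dots> = m (U e) (T (m (m s y) s))" using hom[OF eG cl[OF cl[OF sG y] sG]] by simp
    finally show "T (m (m s y) s) = m (m (T s) (T y)) (T s)"
      using 1 canc[OF UG[OF eG] TG[OF cl[OF cl[OF sG y] sG]] cl[OF cl[OF TsG TG[OF y]] TsG]] by simp
  qed
  show ?thesis using Te main by blast
qed

end
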